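(* Consider the D2EAL algorithm (without periodic reset) described in the context with horizon $T\ge1$ and $\eta_\alpha,\eta_w>0$, and fix $i\in[N]$. Assume: (Assumption 1) $\Omega_i(t)\subseteq\Omega_i(t-1)$ for all $t=1,\dots,T$; (Assumption 2) $|l(x_1,y)-l(x_2,y)|\le L_1\|x_1-x_2\|$ for all $x_1,x_2\in\mathcal A$, $y\in\mathcal Y$, for some constant $L_1\ge0$; (Assumption 3) there are nonnegative numbers $\delta_1,\dots,\delta_T$ with $\|f_{t,k}-f_{t,j}\|\le\delta_t$ for all $k,j\in[N]$, $t=1,\dots,T$. Let $\Delta_o\ge\sum_{t=1}^T\delta_t$ and $i^*\in\arg\min_{j\in[N]}L_{T,j}$. Then $$R_i^{BE}(T):=\hat L_{T,i}-L_{T,i^*}\le\frac{\eta_wT}{8}+\frac{\log d_i(0)}{\eta_w}+\frac{\eta_\alpha T}{8}+\frac{\log 2}{\eta_\alpha}+L_1\Delta_o.$$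
   Context: Setup. There are $N\ge 1$ agents indexed by $i\in[N]$ and a horizon $T\ge1$. The outcome space $\mathcal Y$ and action space $\mathcal A$ are convex subsets of $\mathbb R^n$, $\|\cdot\|$ is the Euclidean norm. The loss $l:\mathcal A\times\mathcal Y\to[0,1]$ is convex in its first argument. The target sequence $y_1,\dots,y_T\in\mathcal Y$ is arbitrary. For each agent $i$ and each $t\ge1$, an "expert" supplies an arbitrary prediction $f_{t,i}\in\mathcal A$ of $y_t$ (available at time $t-1$). Agents communicate over a time-varying undirected graph; $\Omega_i(t)$ is the set of neighbours of agent $i$ at time $t$, $\Lambda_i(t):=\Omega_i(t)\cup\{i\}$ and $d_i(t):=|\Lambda_i(t)|$. D2EAL (without periodic reset). Initialize $\hat f_{0,i}=f_{1,i}$, $\hat\alpha_i(0)=\hat\alpha'_i(0)=\hat w_{ii}(0)=1$ for all $i$. For $t=0,1,\dots,T-1$, each agent $i$ computes: $\alpha_i(t)=\hat\alpha_i(t)/(\hat\alpha_i(t)+\hat\alpha'_i(t))$; individual prediction $\bar f_{t+1,i}=\alpha_i(t)f_{t+1,i}+(1-\alpha_i(t))\hat f_{t,i}$; social weights $w_{ij}(t)=\hat w_{jj}(t)/\sum_{j'\in\Lambda_i(t)}\hat w_{j'j'}(t)$ for $j\in\Lambda_i(t)$ and $w_{ij}(t)=0$ otherwise; social prediction $\hat f_{t+1,i}=\sum_{j\in\Lambda_i(t)}w_{ij}(t)\bar f_{t+1,j}$. After $y_{t+1}$ is revealed, define the losses $l_{t+1,i}=l(f_{t+1,i},y_{t+1})$,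 $\hat l^-_{t+1,i}=l(\hat f_{t,i},y_{t+1})$, $\bar l_{t+1,i}=l(\bar f_{t+1,i},y_{t+1})$, $\hat l_{t+1,i}=l(\hat f_{t+1,i},y_{t+1})$, and update $\hat\alpha_i(t+1)=\hat\alpha_i(t)e^{-\eta_\alpha l_{t+1,i}}$, $\hat\alpha'_i(t+1)=\hat\alpha'_i(t)e^{-\eta_\alpha \hat l^-_{t+1,i}}$, $\hat w_{ii}(t+1)=\hat w_{ii}(t)e^{-\eta_w\bar l_{t+1,i}}$. Cumulative losses: $L_{T,i}=\sum_{t=1}^T l_{t,i}$, $\hat L^-_{T,i}=\sum_{t=1}^T\hat l^-_{t,i}$, $\bar L_{T,i}=\sum_{t=1}^T\bar l_{t,i}$, $\hat L_{T,i}=\sum_{t=1}^T\hat l_{t,i}$. *)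

theory Defs
  imports "HOL-Analysis.Analysis"
begin

text \<open>Agents are 0..N-1. Omega j t is the neighbour set
of agent j at time t. f t j is the expert prediction of agent j for y t.
The state at time t (t = 0,1,...) is the tuple
(alpha_hat(t), alpha_hat'(t), w_hat(t), f_hat_t) indexed by agents.\<close>

definition Lam :: "(nat \<Rightarrow> nat \<Rightarrow> nat set) \<Rightarrow> nat \<Rightarrow> nat \<Rightarrow> nat set" where
  "Lam Om j t = insert j (Om j t)"

type_synonym 'a d2st = "(nat \<Rightarrow> real) \<times> (nat \<Rightarrow> real) \<times> (nat \<Rightarrow> real) \<times> (nat \<Rightarrow> 'a)"

definition alpha_of :: "'a d2st \<Rightarrow> nat \<Rightarrow> real" where
  "alpha_of st j = fst st j / (fst st j + fst (snd st) j)"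

text \<open>individual prediction bar f_{t+1,j} computed from the state at time t\<close>
definition fbar_of :: "(nat \<Rightarrow> nat \<Rightarrow> 'a::real_vector) \<Rightarrow> 'a d2st \<Rightarrow> nat \<Rightarrow> nat \<Rightarrow> 'a" where
  "fbar_of f st t j = alpha_of st j *\<^sub>R f (Suc t) j + (1 - alpha_of st j) *\<^sub>R snd (snd (snd st)) j"

definition wgt_of :: "(nat \<Rightarrow> nat \<Rightarrow> nat set) \<Rightarrow> 'a d2st \<Rightarrow> nat \<Rightarrow> nat \<Rightarrow> nat \<Rightarrow> real" where
  "wgt_of Om st t j k = (if k \<in> Lam Om j t
     then fst (snd (snd st)) k / (\<Sum>k'\<in>Lam Om j t. fst (snd (snd st)) k') else 0)"

text \<open>social prediction hat f_{t+1,j}\<close>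
definition fhat_of :: "(nat \<Rightarrow> nat \<Rightarrow> nat set) \<Rightarrow> (nat \<Rightarrow> nat \<Rightarrow> 'a::real_vector) \<Rightarrow> 'a d2st \<Rightarrow> nat \<Rightarrow> nat \<Rightarrow> 'a" where
  "fhat_of Om f st t j = (\<Sum>k\<in>Lam Om j t. wgt_of Om st t j k *\<^sub>R fbar_of f st t k)"

fun d2eal_state ::
  "('a::real_vector \<Rightarrow> 'y \<Rightarrow> real) \<Rightarrow> (nat \<Rightarrow> nat \<Rightarrow> 'a) \<Rightarrow> (nat \<Rightarrow> 'y) \<Rightarrow>
   (nat \<Rightarrow> nat \<Rightarrow> nat set) \<Rightarrow> real \<Rightarrow> real \<Rightarrow> nat \<Rightarrow> 'a d2st" where
  "d2eal_state l f y Om ea ew 0 = ((\<lambda>_. 1), (\<lambda>_. 1), (\<lambda>_. 1), (\<lambda>j. f 1 j))"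
| "d2eal_state l f y Om ea ew (Suc t) =
     (let st = d2eal_state l f y Om ea ew t in
      ((\<lambda>j. fst st j * exp (- ea * l (f (Suc t) j) (y (Suc t)))),
       (\<lambda>j. fst (snd st) j * exp (- ea * l (snd (snd (snd st)) j) (y (Suc t)))),
       (\<lambda>j. fst (snd (snd st)) j * exp (- ew * l (fbar_of f st t j) (y (Suc t)))),
       (\<lambda>j. fhat_of Om f st t j)))"

text \<open>hat f_{t,j}: the social prediction of agent j for y_t (hat f_{0,j} = f_{1,j})\<close>
definition fhat ::
  "('a::real_vector \<Rightarrow> 'y \<Rightarrow> real) \<Rightarrow> (nat \<Rightarrow> nat \<Rightarrow> 'a) \<Rightarrow> (nat \<Rightarrow> 'y) \<Rightarrow>
   (nat \<Rightarrow> nat \<Rightarrow> nat set) \<Rightarrow> real \<Rightarrow> real \<Rightarrow> nat \<Rightarrow> nat \<Rightarrow> 'a" where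
  "fhat l f y Om ea ew t j = snd (snd (snd (d2eal_state l f y Om ea ew t))) j"

definition cumL :: "('a \<Rightarrow> 'y \<Rightarrow> real) \<Rightarrow> (nat \<Rightarrow> nat \<Rightarrow> 'a) \<Rightarrow> (nat \<Rightarrow> 'y) \<Rightarrow> nat \<Rightarrow> nat \<Rightarrow> real" where
  "cumL l f y T j = (\<Sum>t=1..T. l (f t j) (y t))"

definition cumLhat ::
  "('a::real_vector \<Rightarrow> 'y \<Rightarrow> real) \<Rightarrow> (nat \<Rightarrow> nat \<Rightarrow> 'a) \<Rightarrow> (nat \<Rightarrow> 'y) \<Rightarrow>
   (nat \<Rightarrow> nat \<Rightarrow> nat set) \<Rightarrow> real \<Rightarrow> real \<Rightarrow> nat \<Rightarrow> nat \<Rightarrow> real" where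
  "cumLhat l f y Om ea ew T j = (\<Sum>t=1..T. l (fhat l f y Om ea ew t j) (y t))"

end

theory Submission imports Defs "HOL-Probability.Hoeffding" begin

lemma exp_chord:
  fixes x eta :: real
  assumes "0 \<le> x" "x \<le> 1"
  shows "exp (-eta * x) \<le> 1 - x + x * exp (-eta)"
proof -
  have "exp ((1 - x) *\<^sub>R 0 + x *\<^sub>R (-eta)) \<le> (1 - x) * exp 0 + x * exp (-eta)"
    by (rule convex_onD[OF exp_convex]) (use assms in auto)
  thus ?thesis by (simp add: mult.commute)
qed

lemma hoeff_scalar:
  fixes m eta :: real
  assumes "0 \<le> m" "m \<le> 1" "eta > 0"
  shows "ln (1 - m + m * exp (-eta)) \<le> -eta * m + eta\<^sup>2 / 8"
proof -
  have aux: "-eta * (1 - m) + ln (1 + (1 - m) * (exp eta - 1)) \<le> eta\<^sup>2 / 8"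
    using Hoeffdings_lemma_aux[of eta "1 - m"] assms by simp
  have pos: "1 + (1 - m) * (exp eta - 1) > 0"
    using assms by (intro add_pos_nonneg mult_nonneg_nonneg) auto
  have eq: "1 - m + m * exp (-eta) = exp (-eta) * (1 + (1 - m) * (exp eta - 1))"
    by (simp add: algebra_simps exp_minus field_simps)
  have "ln (1 - m + m * exp (-eta)) = -eta + ln (1 + (1 - m) * (exp eta - 1))"
    unfolding eq using pos by (simp add: ln_mult)
  thus ?thesis using aux by (simp add: algebra_simps)
qed

lemma hoeff_core:
  fixes U M E eta :: real
  assumes "U > 0" "0 \<le> M" "M \<le> U" "E > 0" "eta > 0"
    and "E \<le> U - M + M * exp (-eta)"
  shows "eta * (M / U) \<le> eta\<^sup>2 / 8 + ln U - ln E"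
proof -
  define m where "m = M / U"
  have m: "0 \<le> m" "m \<le> 1" using assms by (auto simp: m_def)
  have q: "1 - m + m * exp (-eta) > 0"
  proof (cases "m = 0")
    case False
    hence "m * exp (-eta) > 0" using m by (intro mult_pos_pos) auto
    thus ?thesis using m by linarith
  qed simp
  have "U - M + M * exp (-eta) = U * (1 - m + m * exp (-eta))"
    using assms by (simp add: m_def field_simps)
  hence "ln E \<le> ln (U * (1 - m + m * exp (-eta)))"
    using assms by simp
  also have "\<dots> = ln U + ln (1 - m + m * exp (-eta))"
    using q assms by (simp add: ln_mult)
  also have "\<dots> \<le> ln U - eta * m + eta\<^sup>2 / 8"
    using hoeff_scalar[OF m assms(5)] by simp
  finally show ?thesis unfolding m_def by simp
qed

lemma hoeff_sum:
  fixes u x :: "'b \<Rightarrow> real" and eta :: real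
  assumes S: "finite S" "S \<noteq> {}" and u: "\<And>k. k \<in> S \<Longrightarrow> u k > 0"
    and x: "\<And>k. k \<in> S \<Longrightarrow> 0 \<le> x k \<and> x k \<le> 1" and eta: "eta > 0"
  shows "eta * ((\<Sum>k\<in>S. u k * x k) / (\<Sum>k\<in>S. u k))
    \<le> eta\<^sup>2 / 8 + ln (\<Sum>k\<in>S. u k) - ln (\<Sum>k\<in>S. u k * exp (-eta * x k))"
proof (rule hoeff_core)
  show "(\<Sum>k\<in>S. u k) > 0" using S u by (intro sum_pos) auto
  show "0 \<le> (\<Sum>k\<in>S. u k * x k)" using u x by (intro sum_nonneg) (meson less_imp_le mult_nonneg_nonneg)
  show "(\<Sum>k\<in>S. u k * x k) \<le> (\<Sum>k\<in>S. u k)"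
    using u x by (intro sum_mono) (simp add: mult_le_cancel_left1 less_imp_le)
  show "(\<Sum>k\<in>S. u k * exp (-eta * x k)) > 0" using S u by (intro sum_pos) auto
  have "(\<Sum>k\<in>S. u k * exp (-eta * x k)) \<le> (\<Sum>k\<in>S. u k * (1 - x k + x k * exp (-eta)))"
    using u x exp_chord by (intro sum_mono mult_left_mono) (auto intro: less_imp_le)
  also have "\<dots> = (\<Sum>k\<in>S. u k - u k * x k + (u k * x k) * exp (-eta))"
    by (rule sum.cong) (simp_all add: algebra_simps)
  also have "\<dots> = (\<Sum>k\<in>S. u k) - (\<Sum>k\<in>S. u k * x k) + (\<Sum>k\<in>S. u k * x k) * exp (-eta)"
    by (simp add: sum.distrib sum_subtractf sum_distrib_right)
  finally show "(\<Sum>k\<in>S. u k * exp (-eta * x k)) \<le> (\<Sum>k\<in>S. u k) - (\<Sum>k\<in>S. u k * x k) + (\<Sum>k\<in>S. u k * x k) * exp (-eta)" .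
qed (fact eta)

lemma hoeff_two:
  fixes a b x1 x2 eta :: real
  assumes "a > 0" "b > 0" "0 \<le> x1" "x1 \<le> 1" "0 \<le> x2" "x2 \<le> 1" "eta > 0"
  shows "eta * ((a * x1 + b * x2) / (a + b))
    \<le> eta\<^sup>2 / 8 + ln (a + b) - ln (a * exp (-eta * x1) + b * exp (-eta * x2))"
proof (rule hoeff_core)
  have c1: "exp (-eta * x1) \<le> 1 - x1 + x1 * exp (-eta)" using exp_chord assms by auto
  have c2: "exp (-eta * x2) \<le> 1 - x2 + x2 * exp (-eta)" using exp_chord assms by auto
  have "a * exp (-eta * x1) + b * exp (-eta * x2) \<le> a * (1 - x1 + x1 * exp (-eta)) + b * (1 - x2 + x2 * exp (-eta))"
    using assms c1 c2 by (intro add_mono mult_left_mono) auto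
  thus "a * exp (-eta * x1) + b * exp (-eta * x2) \<le> a + b - (a * x1 + b * x2) + (a * x1 + b * x2) * exp (-eta)"
    by (simp add: algebra_simps)
  show "a * x1 + b * x2 \<le> a + b" using assms
    using add_mono[OF mult_left_le[of x1 a] mult_left_le[of x2 b]] by linarith
qed (use assms in \<open>auto intro: add_pos_pos\<close>)


lemma sum_shift1: "(\<Sum>t=1..n. g t) = (\<Sum>t<n. g (Suc t) :: real)"
  by (induct n) (auto simp: sum.cl_ivl_Suc)

theorem corollary3:
  fixes N T i istar :: nat
    and A Y :: "'a::euclidean_space set"
    and l :: "'a \<Rightarrow> 'a \<Rightarrow> real"
    and f :: "nat \<Rightarrow> nat \<Rightarrow> 'a"
    and y :: "nat \<Rightarrow> 'a"
    and Om :: "nat \<Rightarrow> nat \<Rightarrow> nat set"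
    and eta_a eta_w L1 Delta_o :: real
    and delta :: "nat \<Rightarrow> real"
  assumes N: "N \<ge> 1" and T: "T \<ge> 1" and i: "i < N"
    and eta_a: "eta_a > 0" and eta_w: "eta_w > 0"
    and convA: "convex A" and convY: "convex Y"
    and l_range: "\<And>x v. x \<in> A \<Longrightarrow> v \<in> Y \<Longrightarrow> 0 \<le> l x v \<and> l x v \<le> 1"
    and l_convex: "\<And>v. v \<in> Y \<Longrightarrow> convex_on A (\<lambda>x. l x v)"
    and y_in: "\<And>t. 1 \<le> t \<Longrightarrow> t \<le> T \<Longrightarrow> y t \<in> Y"
    and f_in: "\<And>t j. 1 \<le> t \<Longrightarrow> t \<le> T \<Longrightarrow> j < N \<Longrightarrow> f t j \<in> A"
    and graph_dom: "\<And>j t. j < N \<Longrightarrow> t \<le> T \<Longrightarrow> Om j t \<subseteq> {..<N} - {j}"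
    and graph_sym: "\<And>j k t. j < N \<Longrightarrow> k < N \<Longrightarrow> t \<le> T \<Longrightarrow> (k \<in> Om j t \<longleftrightarrow> j \<in> Om k t)"
    and asm1: "\<And>t. 1 \<le> t \<Longrightarrow> t \<le> T \<Longrightarrow> Om i t \<subseteq> Om i (t - 1)"
    and L1: "L1 \<ge> 0"
    and asm2: "\<And>x1 x2 v. x1 \<in> A \<Longrightarrow> x2 \<in> A \<Longrightarrow> v \<in> Y \<Longrightarrow> \<bar>l x1 v - l x2 v\<bar> \<le> L1 * norm (x1 - x2)"
    and delta_nn: "\<And>t. 1 \<le> t \<Longrightarrow> t \<le> T \<Longrightarrow> delta t \<ge> 0"
    and asm3: "\<And>t k j. 1 \<le> t \<Longrightarrow> t \<le> T \<Longrightarrow> k < N \<Longrightarrow> j < N \<Longrightarrow> norm (f t k - f t j) \<le> delta t"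
    and Delta_o: "Delta_o \<ge> (\<Sum>t=1..T. delta t)"
    and istar: "istar < N" "\<And>j. j < N \<Longrightarrow> cumL l f y T istar \<le> cumL l f y T j"
  shows "cumLhat l f y Om eta_a eta_w T i - cumL l f y T istar
    \<le> eta_w * T / 8 + ln (card (Lam Om i 0)) / eta_w + eta_a * T / 8 + ln 2 / eta_a + L1 * Delta_o"
proof -
  define st where "st = d2eal_state l f y Om eta_a eta_w"
  define ah where "ah = (\<lambda>t j. fst (st t) j)"
  define ah' where "ah' = (\<lambda>t j. fst (snd (st t)) j)"
  define wh where "wh = (\<lambda>t j. fst (snd (snd (st t))) j)"
  define fh where "fh = (\<lambda>t j. snd (snd (snd (st t))) j)"
  define fb where "fb = (\<lambda>t j. fbar_of f (st t) t j)"
  have ah0: "ah 0 j = 1" "ah' 0 j = 1" "wh 0 j = 1" "fh 0 j = f 1 j" for j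
    by (simp_all add: ah_def ah'_def wh_def fh_def st_def)
  have ahS: "ah (Suc t) j = ah t j * exp (- eta_a * l (f (Suc t) j) (y (Suc t)))" for t j
    by (simp add: ah_def st_def Let_def)
  have ah'S: "ah' (Suc t) j = ah' t j * exp (- eta_a * l (fh t j) (y (Suc t)))" for t j
    by (simp add: ah'_def fh_def st_def Let_def)
  have whS: "wh (Suc t) j = wh t j * exp (- eta_w * l (fb t j) (y (Suc t)))" for t j
    by (simp add: wh_def fb_def st_def Let_def)
  have fhS: "fh (Suc t) j = (\<Sum>k\<in>Lam Om j t. (wh t k / (\<Sum>k'\<in>Lam Om j t. wh t k')) *\<^sub>R fb t k)" for t j
    by (simp add: fh_def wh_def fb_def st_def Let_def fhat_of_def wgt_of_def cong: sum.cong)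
  have fb_eq: "fb t j = (ah t j / (ah t j + ah' t j)) *\<^sub>R f (Suc t) j
      + (1 - ah t j / (ah t j + ah' t j)) *\<^sub>R fh t j" for t j
    by (simp add: fb_def fbar_of_def alpha_of_def ah_def ah'_def fh_def)
  have pos: "ah t j > 0 \<and> ah' t j > 0 \<and> wh t j > 0" for t j
    by (induct t) (simp_all add: ah0 ahS ah'S whS)
  have fhat_eq: "fhat l f y Om eta_a eta_w t j = fh t j" for t j
    by (simp add: fhat_def fh_def st_def)
  have Lam_sub: "Lam Om j t \<subseteq> {..<N}" if "j < N" "t \<le> T" for j t
    using graph_dom[OF that] that by (auto simp: Lam_def)
  have Lam_fin: "finite (Lam Om j t)" if "j < N" "t \<le> T" for j t
    using Lam_sub[OF that] finite_subset by blast
  have Lam_in: "j \<in> Lam Om j t" for j t by (simp add: Lam_def)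
  have alpha01: "0 \<le> ah t j / (ah t j + ah' t j) \<and> ah t j / (ah t j + ah' t j) \<le> 1" for t j
    using pos[of t j] by (simp add: divide_simps)
  have inA: "fh t j \<in> A \<and> fb t j \<in> A" if "t < T" "j < N" for t j
    using that
  proof (induct t arbitrary: j)
    case 0
    have "fh 0 j \<in> A" using ah0 f_in 0 T by simp
    moreover have "f (Suc 0) j \<in> A" using f_in 0 T by simp
    ultimately show ?case unfolding fb_eq using alpha01[of 0 j]
      by (intro conjI convexD[OF convA]) auto
  next
    case (Suc t)
    have fbk: "fb t k \<in> A" if "k < N" for k using Suc that by auto
    have fhj: "fh (Suc t) j \<in> A"
      unfolding fhS
    proof (rule convex_sum[OF Lam_fin convA])
      show "j < N" "t \<le> T" using Suc by auto
      have "(\<Sum>k\<in>Lam Om j t. wh t k) > 0"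
        using pos Lam_fin[of j t] Suc Lam_in by (intro sum_pos2[where i=j]) (auto intro: less_imp_le)
      thus "(\<Sum>k\<in>Lam Om j t. wh t k / (\<Sum>k'\<in>Lam Om j t. wh t k')) = 1"
        by (simp add: sum_divide_distrib[symmetric])
      show "\<And>k. k \<in> Lam Om j t \<Longrightarrow> 0 \<le> wh t k / (\<Sum>k'\<in>Lam Om j t. wh t k')"
        using pos by (intro divide_nonneg_nonneg sum_nonneg) (auto intro: less_imp_le)
      show "\<And>k. k \<in> Lam Om j t \<Longrightarrow> fb t k \<in> A"
        using fbk Lam_sub[of j t] Suc by auto
    qed
    moreover have "f (Suc (Suc t)) j \<in> A" using f_in Suc by simp
    ultimately show ?case using fhj unfolding fb_eq[of "Suc t"] using alpha01[of "Suc t" j]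
      by (intro conjI convexD[OF convA]) auto
  qed

  have yS: "y (Suc t) \<in> Y" if "t < T" for t using y_in that by simp
  have fS: "f (Suc t) j \<in> A" if "t < T" "j < N" for t j using f_in that by simp
  have lr: "0 \<le> l x v \<and> l x v \<le> 1" if "x \<in> A" "v \<in> Y" for x v using l_range that .
  have step1: "eta_w * l (fh (Suc t) i) (y (Suc t)) \<le> eta_w\<^sup>2 / 8 + ln (\<Sum>k\<in>Lam Om i t. wh t k)
      - ln (\<Sum>k\<in>Lam Om i t. wh (Suc t) k)" if t: "t < T" for t
  proof -
    define S where "S = Lam Om i t"
    define P where "P = (\<Sum>k\<in>S. wh t k)"
    have finS: "finite S" using Lam_fin[of i t] i t by (simp add: S_def)
    have SN: "k < N" if "k \<in> S" for k using Lam_sub[of i t] i t that by (auto simp: S_def)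
    have Ppos: "P > 0" unfolding P_def
      using pos finS Lam_in[of i t] by (intro sum_pos2[where i=i]) (auto simp: S_def intro: less_imp_le)
    have xr: "0 \<le> l (fb t k) (y (Suc t)) \<and> l (fb t k) (y (Suc t)) \<le> 1" if "k \<in> S" for k
      using lr inA[OF t SN[OF that]] yS[OF t] by blast
    have "l (fh (Suc t) i) (y (Suc t)) \<le> (\<Sum>k\<in>S. (wh t k / P) * l (fb t k) (y (Suc t)))"
      unfolding fhS S_def[symmetric] P_def[symmetric]
    proof (rule convex_on_sum[OF finS _ l_convex[OF yS[OF t]]])
      show "S \<noteq> {}" using Lam_in[of i t] by (auto simp: S_def)
      show "(\<Sum>k\<in>S. wh t k / P) = 1" using Ppos by (simp add: sum_divide_distrib[symmetric] P_def)
      show "\<And>k. k \<in> S \<Longrightarrow> 0 \<le> wh t k / P" using pos Ppos by (auto intro: less_imp_le)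
      show "\<And>k. k \<in> S \<Longrightarrow> fb t k \<in> A" using inA[OF t] SN by blast
    qed
    also have "\<dots> = (\<Sum>k\<in>S. wh t k * l (fb t k) (y (Suc t))) / P"
      by (simp add: sum_divide_distrib)
    finally have a0: "l (fh (Suc t) i) (y (Suc t)) \<le> (\<Sum>k\<in>S. wh t k * l (fb t k) (y (Suc t))) / P" .
    have a: "eta_w * l (fh (Suc t) i) (y (Suc t)) \<le> eta_w * ((\<Sum>k\<in>S. wh t k * l (fb t k) (y (Suc t))) / P)"
      by (rule mult_left_mono[OF a0]) (use eta_w in simp)
    have b: "eta_w * ((\<Sum>k\<in>S. wh t k * l (fb t k) (y (Suc t))) / P) \<le> eta_w\<^sup>2 / 8 + ln P
       - ln (\<Sum>k\<in>S. wh t k * exp (- eta_w * l (fb t k) (y (Suc t))))"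
      unfolding P_def
    proof (rule hoeff_sum[OF finS])
      show "S \<noteq> {}" using Lam_in[of i t] by (auto simp: S_def)
      show "\<And>k. k \<in> S \<Longrightarrow> 0 < wh t k" using pos by blast
      show "\<And>k. k \<in> S \<Longrightarrow> 0 \<le> l (fb t k) (y (Suc t)) \<and> l (fb t k) (y (Suc t)) \<le> 1" by (rule xr)
    qed (rule eta_w)
    show ?thesis using a b by (simp add: S_def P_def whS)
  qed
  define Psi where "Psi = (\<lambda>n. \<Sum>k\<in>Lam Om i (n - 1). wh n k)"
  have Psi_pos: "Psi n > 0" if "n \<le> T" for n
    unfolding Psi_def using pos Lam_fin[of i "n - 1"] i that Lam_in
    by (intro sum_pos2[where i=i]) (auto intro: less_imp_le)
  have tele1: "eta_w * (\<Sum>t<n. l (fh (Suc t) i) (y (Suc t))) \<le> eta_w\<^sup>2 * n / 8 + ln (Psi 0) - ln (Psi n)"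
    if "n \<le> T" for n
    using that
  proof (induct n)
    case 0 then show ?case by simp
  next
    case (Suc n)
    have sub: "Lam Om i n \<subseteq> Lam Om i (n - 1)"
    proof (cases n)
      case (Suc m) then show ?thesis using asm1[of n] Suc.prems by (auto simp: Lam_def)
    qed simp
    have "(\<Sum>k\<in>Lam Om i n. wh n k) \<le> Psi n"
      unfolding Psi_def using pos Lam_fin[of i "n - 1"] i Suc.prems
      by (intro sum_mono2[OF _ sub]) (auto intro: less_imp_le)
    moreover have "(\<Sum>k\<in>Lam Om i n. wh n k) > 0"
      using pos Lam_fin[of i n] i Suc.prems Lam_in
      by (intro sum_pos2[where i=i]) (auto intro: less_imp_le)
    ultimately have "ln (\<Sum>k\<in>Lam Om i n. wh n k) \<le> ln (Psi n)" by simp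
    moreover have "Psi (Suc n) = (\<Sum>k\<in>Lam Om i n. wh (Suc n) k)" by (simp add: Psi_def)
    ultimately have st: "eta_w * l (fh (Suc n) i) (y (Suc n)) \<le> eta_w\<^sup>2 / 8 + ln (Psi n) - ln (Psi (Suc n))"
      using step1[of n] Suc.prems by simp
    have IH: "eta_w * (\<Sum>t<n. l (fh (Suc t) i) (y (Suc t))) \<le> eta_w\<^sup>2 * n / 8 + ln (Psi 0) - ln (Psi n)"
      using Suc by simp
    have e1: "eta_w * (\<Sum>t<Suc n. l (fh (Suc t) i) (y (Suc t))) = eta_w * (\<Sum>t<n. l (fh (Suc t) i) (y (Suc t))) + eta_w * l (fh (Suc n) i) (y (Suc n))"
      by (simp add: algebra_simps)
    have e2: "eta_w\<^sup>2 * real (Suc n) / 8 = eta_w\<^sup>2 * n / 8 + eta_w\<^sup>2 / 8" by (simp add: field_simps)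
    show ?case using st IH e1 e2 by linarith
  qed
  have lnwh: "ln (wh n i) = - eta_w * (\<Sum>t<n. l (fb t i) (y (Suc t)))" for n
  proof (induct n)
    case 0 then show ?case by (simp add: ah0)
  next
    case (Suc n)
    have "ln (wh (Suc n) i) = ln (wh n i) + (- eta_w * l (fb n i) (y (Suc n)))"
      unfolding whS using pos[of n i] by (simp add: ln_mult)
    thus ?case using Suc.hyps by (simp add: algebra_simps)
  qed
  have Psi0: "Psi 0 = card (Lam Om i 0)" by (simp add: Psi_def ah0)
  have PsiT: "wh T i \<le> Psi T"
    unfolding Psi_def using pos Lam_fin[of i "T - 1"] i Lam_in
    by (intro member_le_sum) (auto intro: less_imp_le)
  have lnP: "ln (wh T i) \<le> ln (Psi T)" using PsiT pos[of T i] by simp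
  have rw1: "eta_w * (eta_w * T / 8 + ln (card (Lam Om i 0)) / eta_w + (\<Sum>t<T. l (fb t i) (y (Suc t))))
     = eta_w\<^sup>2 * T / 8 + ln (Psi 0) + eta_w * (\<Sum>t<T. l (fb t i) (y (Suc t)))"
    unfolding Psi0 using eta_w by (simp add: field_simps power2_eq_square)
  have L1bound: "eta_w * (\<Sum>t<T. l (fh (Suc t) i) (y (Suc t)))
      \<le> eta_w * (eta_w * T / 8 + ln (card (Lam Om i 0)) / eta_w + (\<Sum>t<T. l (fb t i) (y (Suc t))))"
    unfolding rw1 using tele1[of T] lnwh[of T] lnP by simp
  hence H: "(\<Sum>t<T. l (fh (Suc t) i) (y (Suc t)))
      \<le> eta_w * T / 8 + ln (card (Lam Om i 0)) / eta_w + (\<Sum>t<T. l (fb t i) (y (Suc t)))"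
    using eta_w by simp
  have step2: "eta_a * l (fb t i) (y (Suc t)) \<le> eta_a\<^sup>2 / 8 + ln (ah t i + ah' t i) - ln (ah (Suc t) i + ah' (Suc t) i)"
    if t: "t < T" for t
  proof -
    define a where "a = ah t i"
    define b where "b = ah' t i"
    define x1 where "x1 = l (f (Suc t) i) (y (Suc t))"
    define x2 where "x2 = l (fh t i) (y (Suc t))"
    have ab: "a > 0" "b > 0" using pos by (auto simp: a_def b_def)
    have r1: "0 \<le> x1" "x1 \<le> 1" using lr[OF fS[OF t i] yS[OF t]] by (auto simp: x1_def)
    have r2: "0 \<le> x2" "x2 \<le> 1" using lr[OF conjunct1[OF inA[OF t i]] yS[OF t]] by (auto simp: x2_def)
    define al where "al = a / (a + b)"
    have al01: "0 \<le> al" "al \<le> 1" using alpha01[of t i] by (auto simp: al_def a_def b_def)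
    have fbt: "fb t i = (1 - (1 - al)) *\<^sub>R f (Suc t) i + (1 - al) *\<^sub>R fh t i"
      by (simp add: fb_eq al_def a_def b_def)
    have "l (fb t i) (y (Suc t)) \<le> (1 - (1 - al)) * x1 + (1 - al) * x2"
      unfolding fbt x1_def x2_def
      by (rule convex_onD[OF l_convex[OF yS[OF t]]]) (use al01 fS[OF t i] inA[OF t i] in auto)
    also have "\<dots> = (a * x1 + b * x2) / (a + b)"
    proof -
      have h1: "1 - (1 - al) = a / (a + b)" by (simp add: al_def)
      have h2: "1 - al = b / (a + b)" using ab by (simp add: al_def field_simps)
      show ?thesis unfolding h1 unfolding h2 by (simp add: add_divide_distrib)
    qed
    finally have c0: "l (fb t i) (y (Suc t)) \<le> (a * x1 + b * x2) / (a + b)" .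
    have c: "eta_a * l (fb t i) (y (Suc t)) \<le> eta_a * ((a * x1 + b * x2) / (a + b))"
      by (rule mult_left_mono[OF c0]) (use eta_a in simp)
    have eqP: "ah (Suc t) i + ah' (Suc t) i = a * exp (- eta_a * x1) + b * exp (- eta_a * x2)"
      by (simp add: ahS ah'S a_def b_def x1_def x2_def)
    have eqQ: "ah t i + ah' t i = a + b" by (simp add: a_def b_def)
    show ?thesis unfolding eqP eqQ using c hoeff_two[OF ab r1 r2 eta_a] by linarith
  qed
  have tele2: "eta_a * (\<Sum>t<n. l (fb t i) (y (Suc t))) \<le> eta_a\<^sup>2 * n / 8 + ln 2 - ln (ah n i + ah' n i)"
    if "n \<le> T" for n
    using that
  proof (induct n)
    case 0 then show ?case by (simp add: ah0)
  next
    case (Suc n)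
    have st: "eta_a * l (fb n i) (y (Suc n)) \<le> eta_a\<^sup>2 / 8 + ln (ah n i + ah' n i) - ln (ah (Suc n) i + ah' (Suc n) i)"
      using step2[of n] Suc.prems by simp
    have IH: "eta_a * (\<Sum>t<n. l (fb t i) (y (Suc t))) \<le> eta_a\<^sup>2 * n / 8 + ln 2 - ln (ah n i + ah' n i)"
      using Suc by simp
    have e1: "eta_a * (\<Sum>t<Suc n. l (fb t i) (y (Suc t))) = eta_a * (\<Sum>t<n. l (fb t i) (y (Suc t))) + eta_a * l (fb n i) (y (Suc n))"
      by (simp add: algebra_simps)
    have e2: "eta_a\<^sup>2 * real (Suc n) / 8 = eta_a\<^sup>2 * n / 8 + eta_a\<^sup>2 / 8" by (simp add: field_simps)
    show ?case using st IH e1 e2 by linarith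
  qed
  have lnah: "ln (ah n i) = - eta_a * (\<Sum>t<n. l (f (Suc t) i) (y (Suc t)))" for n
  proof (induct n)
    case 0 then show ?case by (simp add: ah0)
  next
    case (Suc n)
    have "ln (ah (Suc n) i) = ln (ah n i) + (- eta_a * l (f (Suc n) i) (y (Suc n)))"
      unfolding ahS using pos[of n i] by (simp add: ln_mult)
    thus ?case using Suc.hyps by (simp add: algebra_simps)
  qed
  have lnA: "ln (ah T i) \<le> ln (ah T i + ah' T i)" using pos[of T i] by simp
  have rw2: "eta_a * (eta_a * T / 8 + ln 2 / eta_a + (\<Sum>t<T. l (f (Suc t) i) (y (Suc t))))
     = eta_a\<^sup>2 * T / 8 + ln 2 + eta_a * (\<Sum>t<T. l (f (Suc t) i) (y (Suc t)))"
    using eta_a by (simp add: field_simps power2_eq_square)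
  have "eta_a * (\<Sum>t<T. l (fb t i) (y (Suc t)))
      \<le> eta_a * (eta_a * T / 8 + ln 2 / eta_a + (\<Sum>t<T. l (f (Suc t) i) (y (Suc t))))"
    unfolding rw2 using tele2[of T] lnah[of T] lnA by simp
  hence B: "(\<Sum>t<T. l (fb t i) (y (Suc t)))
      \<le> eta_a * T / 8 + ln 2 / eta_a + (\<Sum>t<T. l (f (Suc t) i) (y (Suc t)))"
    using eta_a by simp
  have "cumL l f y T i - cumL l f y T istar = (\<Sum>t=1..T. l (f t i) (y t) - l (f t istar) (y t))"
    by (simp add: cumL_def sum_subtractf)
  also have "\<dots> \<le> (\<Sum>t=1..T. L1 * delta t)"
  proof (rule sum_mono)
    fix t assume "t \<in> {1..T}"
    hence t: "1 \<le> t" "t \<le> T" by auto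
    have "l (f t i) (y t) - l (f t istar) (y t) \<le> L1 * norm (f t i - f t istar)"
      using asm2[OF f_in[OF t i] f_in[OF t istar(1)] y_in[OF t]] by simp
    also have "\<dots> \<le> L1 * delta t" using asm3[OF t i istar(1)] L1 by (simp add: mult_left_mono)
    finally show "l (f t i) (y t) - l (f t istar) (y t) \<le> L1 * delta t" .
  qed
  also have "\<dots> \<le> L1 * Delta_o" using Delta_o L1 by (simp add: sum_distrib_left[symmetric] mult_left_mono)
  finally have C: "cumL l f y T i - cumL l f y T istar \<le> L1 * Delta_o" .
  have e1: "cumLhat l f y Om eta_a eta_w T i = (\<Sum>t<T. l (fh (Suc t) i) (y (Suc t)))"
    unfolding cumLhat_def fhat_eq by (rule sum_shift1)
  have e2: "cumL l f y T i = (\<Sum>t<T. l (f (Suc t) i) (y (Suc t)))"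
    unfolding cumL_def by (rule sum_shift1)
  show ?thesis using H B C e1 e2 by linarith
qed

end
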